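(* Let $m\ge 1$ and $n\geq 2$ be integers. Then $$SO(Q(m,n))=m\Big(\frac{(m+n-2)(m-1)}{2}+(n-1)^2\big(\tfrac{n}{2}-1\big)\Big)\sqrt{2}+m(n-1)\sqrt{(m+n-2)^2+(n-1)^2}.$$
   Context: For a finite simple graph $G$ and vertex $u$, $d_u$ is the degree of $u$ in $G$, and the Sombor index is $SO(G)=\sum_{uv\in E(G)}\sqrt{d_u^2+d_v^2}$. The graph $Q(m,n)$ is obtained from the complete graph $K_m$ and $m$ pairwise disjoint copies of the complete graph $K_n$ by identifying each vertex of $K_m$ with a vertex of its own (unique) copy of $K_n$. *)

theory Defs
  imports Complex_Main
begin

type_synonym 'a graph = "'a set \<times> 'a set set"

definition simple_graph :: "'a graph \<Rightarrow> bool" where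
  "simple_graph G \<longleftrightarrow> finite (fst G) \<and> (\<forall>e\<in>snd G. card e = 2 \<and> e \<subseteq> fst G)"

definition degree :: "'a graph \<Rightarrow> 'a \<Rightarrow> nat" where
  "degree G u = card {e \<in> snd G. u \<in> e}"

text \<open>Sombor index: sum over edges uv of sqrt(d_u^2 + d_v^2); for an edge e = {u,v}
  with u \<noteq> v the inner sum is exactly d_u^2 + d_v^2.\<close>
definition sombor :: "'a graph \<Rightarrow> real" where
  "sombor G = (\<Sum>e\<in>snd G. sqrt (\<Sum>x\<in>e. (real (degree G x))^2))"

text \<open>Q(m,n): copy i of K_n has vertices (i,j), j<n; the vertex (i,0) of copy i is
  identified with vertex i of K_m.\<close>
definition Qgraph :: "nat \<Rightarrow> nat \<Rightarrow> (nat \<times> nat) graph" where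
  "Qgraph m n =
     ({0..<m} \<times> {0..<n},
      {{(i,0),(k,0)} | i k. i < m \<and> k < m \<and> i \<noteq> k}
      \<union> {{(i,j),(i,l)} | i j l. i < m \<and> j < n \<and> l < n \<and> j \<noteq> l})"

end

theory Submission
  imports Defs
begin

definition adjQ :: "nat \<Rightarrow> nat \<Rightarrow> nat \<times> nat \<Rightarrow> nat \<times> nat \<Rightarrow> bool" where
  "adjQ m n u v \<longleftrightarrow> u \<in> {0..<m} \<times> {0..<n} \<and> v \<in> {0..<m} \<times> {0..<n} \<and> u \<noteq> v
     \<and> (fst u = fst v \<or> (snd u = 0 \<and> snd v = 0))"

lemma E_eq: assumes "0 < n" shows "snd (Qgraph m n) = {{u,v} | u v. adjQ m n u v}"
proof -
  have "\<And>e. e \<in> snd (Qgraph m n) \<longleftrightarrow> e \<in> {{u,v} | u v. adjQ m n u v}"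
  proof
    fix e assume "e \<in> snd (Qgraph m n)"
    then show "e \<in> {{u,v} | u v. adjQ m n u v}"
    proof -
      from \<open>e \<in> snd (Qgraph m n)\<close> consider
        (A) i k where "e = {(i, 0), (k, 0)}" "i < m" "k < m" "i \<noteq> k"
      | (B) i j l where "e = {(i, j), (i, l)}" "i < m" "j < n" "l < n" "j \<noteq> l"
        unfolding Qgraph_def by auto
      then show ?thesis
      proof cases
        case A
        then have "adjQ m n (i,0) (k,0)" using assms by (auto simp: adjQ_def)
        then show ?thesis using A(1) by blast
      next
        case B
        then have "adjQ m n (i,j) (i,l)" by (auto simp: adjQ_def)
        then show ?thesis using B(1) by blast
      qed
    qed
  next
    fix e assume "e \<in> {{u,v} | u v. adjQ m n u v}"
    then obtain a b c d where e: "e = {(a,b),(c,d)}" and ad: "adjQ m n (a,b) (c,d)" by auto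
    show "e \<in> snd (Qgraph m n)"
    proof (cases "a = c")
      case True
      then show ?thesis using ad e unfolding Qgraph_def adjQ_def by auto
    next
      case False
      then show ?thesis using ad e unfolding Qgraph_def adjQ_def by auto
    qed
  qed
  then show ?thesis by blast
qed

lemma adj_sym: "adjQ m n u v \<Longrightarrow> adjQ m n v u"
  unfolding adjQ_def by auto

lemma deg_eq: assumes "0 < n" shows "degree (Qgraph m n) u = card {v. adjQ m n u v}"
proof -
  have "{e \<in> snd (Qgraph m n). u \<in> e} = (\<lambda>v. {u,v}) ` {v. adjQ m n u v}"
  proof
    show "{e \<in> snd (Qgraph m n). u \<in> e} \<subseteq> (\<lambda>v. {u,v}) ` {v. adjQ m n u v}"
      unfolding E_eq[OF assms] using adj_sym by (auto simp: doubleton_eq_iff)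
    show "(\<lambda>v. {u,v}) ` {v. adjQ m n u v} \<subseteq> {e \<in> snd (Qgraph m n). u \<in> e}"
      unfolding E_eq[OF assms] by blast
  qed
  moreover have "inj_on (\<lambda>v. {u,v}) {v. adjQ m n u v}"
    by (auto simp: inj_on_def doubleton_eq_iff)
  ultimately show ?thesis unfolding degree_def by (simp add: card_image)
qed

lemma deg0: assumes "i < m" "0 < n" shows "degree (Qgraph m n) (i,0) = m + n - 2"
proof -
  let ?X = "{..<m} \<times> {0::nat}" and ?Y = "{i} \<times> {..<n}"
  have N: "{v. adjQ m n (i,0) v} = (?X \<union> ?Y) - {(i,0)}"
    using assms unfolding adjQ_def by auto
  have "card ?X + card ?Y = card (?X \<union> ?Y) + card (?X \<inter> ?Y)"
    by (rule card_Un_Int) auto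
  moreover have "?X \<inter> ?Y = {(i,0)}" using assms by auto
  moreover have "card ?X = m" "card ?Y = n" by (simp_all add: card_cartesian_product)
  ultimately have "card (?X \<union> ?Y) = m + n - 1" by simp
  moreover have "(i,0) \<in> ?X \<union> ?Y" using assms by auto
  ultimately show ?thesis unfolding deg_eq[OF assms(2)] N by simp
qed

lemma deg1: assumes "i < m" "0 < j" "j < n" shows "degree (Qgraph m n) (i,j) = n - 1"
proof -
  have N: "{v. adjQ m n (i,j) v} = ({i} \<times> {..<n}) - {(i,j)}"
    using assms unfolding adjQ_def by auto
  show ?thesis unfolding deg_eq[of n, OF order.strict_trans[OF assms(2,3)]] N using assms by (simp add: card_cartesian_product)
qed


lemma card_Asets:
  assumes "finite S" shows "card {e. e \<subseteq> S \<and> card e = 2} = card S choose 2"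
  using n_subsets[OF assms, of 2] by (simp add: conj_commute)

lemma ch2: "real (k choose 2) = real k * (real k - 1) / 2"
proof -
  have ev: "even (k * (k - 1))" by (cases k) auto
  have "k * (k - 1) = 2 * (k choose 2)" using ev by (simp add: choose_two)
  then have "real (k * (k - 1)) = 2 * real (k choose 2)" by (metis of_nat_mult of_nat_numeral)
  moreover have "real (k * (k - 1)) = real k * (real k - 1)" by (cases k) (auto simp: algebra_simps)
  ultimately show ?thesis by simp
qed

theorem mainTheorem2:
  fixes m n :: nat
  assumes "m \<ge> 1" and "n \<ge> 2"
  shows "sombor (Qgraph m n) =
     real m * ((real m + real n - 2) * (real m - 1) / 2 + (real n - 1)^2 * (real n / 2 - 1)) * sqrt 2
     + real m * (real n - 1) * sqrt ((real m + real n - 2)^2 + (real n - 1)^2)"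
proof -
  have n0: "0 < n" using assms by simp
  define G where "G = Qgraph m n"
  define f where "f e = sqrt (\<Sum>x\<in>e. (real (degree G x))^2)" for e
  define A where "A = {e. e \<subseteq> {..<m} \<times> {0::nat} \<and> card e = 2}"
  define B where "B = (\<lambda>(i,l). {(i,0::nat),(i,l)}) ` ({..<m} \<times> {1..<n})"
  define C where "C = (\<Union>i<m. {e. e \<subseteq> {i} \<times> {1..<n} \<and> card e = 2})"
  have E: "snd G = A \<union> B \<union> C"
  proof
    show "snd G \<subseteq> A \<union> B \<union> C"
    proof
      fix e assume "e \<in> snd G"
      then consider
        (A) i k where "e = {(i, 0), (k, 0)}" "i < m" "k < m" "i \<noteq> k"
      | (B) i j l where "e = {(i, j), (i, l)}" "i < m" "j < n" "l < n" "j \<noteq> l"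
        unfolding G_def Qgraph_def by auto
      then show "e \<in> A \<union> B \<union> C"
      proof cases
        case A
        then show ?thesis unfolding A_def by auto
      next
        case B
        show ?thesis
        proof (cases "j = 0")
          case True
          then have "e \<in> B" unfolding B_def using B by (auto intro!: image_eqI[of _ _ "(i,l)"])
          then show ?thesis by blast
        next
          case j: False
          show ?thesis
          proof (cases "l = 0")
            case True
            then have "e \<in> B" unfolding B_def using B by (auto intro!: image_eqI[of _ _ "(i,j)"])
            then show ?thesis by blast
          next
            case False
            then have "e \<in> C" unfolding C_def using B j by auto
            then show ?thesis by blast
          qed
        qed
      qed
    qed
    show "A \<union> B \<union> C \<subseteq> snd G"
    proof
      fix e assume "e \<in> A \<union> B \<union> C"
      then consider "e \<in> A" | "e \<in> B" | "e \<in> C" by blast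
      then show "e \<in> snd G"
      proof cases
        case 1
        then obtain x y where xy: "e = {x,y}" "x \<noteq> y" "x \<in> {..<m} \<times> {0::nat}" "y \<in> {..<m} \<times> {0::nat}"
          unfolding A_def by (auto simp: card_2_iff)
        then show ?thesis unfolding G_def Qgraph_def by auto
      next
        case 2
        then obtain i l where il: "e = {(i,0),(i,l)}" "i < m" "1 \<le> l" "l < n"
          unfolding B_def by auto
        then have "\<exists>i' j' l'. e = {(i',j'),(i',l')} \<and> i' < m \<and> j' < n \<and> l' < n \<and> j' \<noteq> l'"
          using n0 by (intro exI[of _ i] exI[of _ 0] exI[of _ l]) simp
        then show ?thesis unfolding G_def Qgraph_def by simp
      next
        case 3
        then obtain i x y where xy: "i < m" "e = {x,y}" "x \<noteq> y" "x \<in> {i} \<times> {1..<n}" "y \<in> {i} \<times> {1..<n}"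
          unfolding C_def by (auto simp: card_2_iff)
        then show ?thesis unfolding G_def Qgraph_def by auto
      qed
    qed
  qed
  have finA: "finite A" unfolding A_def
    by (rule finite_subset[of _ "Pow ({..<m} \<times> {0})"]) auto
  have finB: "finite B" unfolding B_def by auto
  have finC: "finite C" unfolding C_def
  proof (intro finite_UN_I finite_lessThan)
    fix i show "finite {e. e \<subseteq> {i} \<times> {1..<n} \<and> card e = 2}"
      by (rule finite_subset[of _ "Pow ({i} \<times> {1..<n})"]) auto
  qed
  have Cno0: "(x, 0) \<notin> e" if "e \<in> C" for x e
  proof -
    from that obtain i where "e \<subseteq> {i} \<times> {1..<n}" unfolding C_def by auto
    then show ?thesis by auto
  qed
  have Ahas0: "\<exists>x. (x, 0) \<in> e" if "e \<in> A" for e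
  proof -
    from that have "card e = 2" "e \<subseteq> {..<m} \<times> {0::nat}" unfolding A_def by auto
    then obtain z where "z \<in> e" "z \<in> {..<m} \<times> {0::nat}" by (metis card.empty ex_in_conv subsetD zero_neq_numeral)
    then show ?thesis by (metis SigmaE singletonD)
  qed
  have Bprop: "\<exists>i l. e = {(i,0),(i,l)} \<and> i < m \<and> 1 \<le> l \<and> l < n" if "e \<in> B" for e
  proof -
    from that obtain p where p: "p \<in> {..<m} \<times> {1..<n}" "e = (\<lambda>(i, l). {(i, 0::nat), (i, l)}) p"
      unfolding B_def by blast
    obtain i l where "p = (i,l)" by (cases p)
    with p show ?thesis by auto
  qed
  have AB: "A \<inter> B = {}"
  proof (rule ccontr)
    assume "A \<inter> B \<noteq> {}"
    then obtain e where "e \<in> A" "e \<in> B" by blast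
    then obtain i l where "e = {(i,0),(i,l)}" "1 \<le> l" "e \<subseteq> {..<m} \<times> {0::nat}"
      using Bprop unfolding A_def by blast
    then show False by auto
  qed
  have ABC: "(A \<union> B) \<inter> C = {}"
  proof (rule ccontr)
    assume "(A \<union> B) \<inter> C \<noteq> {}"
    then obtain e where "e \<in> A \<or> e \<in> B" "e \<in> C" by blast
    then obtain x where "(x,0) \<in> e" using Ahas0 Bprop by blast
    then show False using Cno0 \<open>e \<in> C\<close> by blast
  qed
  define d0 where "d0 = real m + real n - 2"
  define d1 where "d1 = real n - 1"
  have dg0: "real (degree G (i,0)) = d0" if "i < m" for i
    using deg0[OF that n0] assms unfolding G_def d0_def by simp
  have dg1: "real (degree G (i,j)) = d1" if "i < m" "0 < j" "j < n" for i j
    using deg1[OF that] assms unfolding G_def d1_def by simp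
  have d0pos: "d0 \<ge> 0" "d1 \<ge> 0" using assms unfolding d0_def d1_def by auto
  have two: "\<exists>x y. e = {x,y} \<and> x \<noteq> y \<and> x \<in> S \<and> y \<in> S" if "e \<subseteq> S" "card e = 2" for e :: "(nat \<times> nat) set" and S
  proof -
    from that(2) obtain x y where "e = {x,y}" "x \<noteq> y" by (meson card_2_iff)
    with that(1) show ?thesis by blast
  qed
  have fA: "f e = d0 * sqrt 2" if "e \<in> A" for e
  proof -
    from that have "e \<subseteq> {..<m} \<times> {0::nat}" "card e = 2" unfolding A_def by auto
    then obtain x y where xy: "e = {x,y}" "x \<noteq> y" "x \<in> {..<m} \<times> {0::nat}" "y \<in> {..<m} \<times> {0::nat}"
      using two by blast
    then obtain i k where ik: "x = (i,0)" "y = (k,0)" "i < m" "k < m" by blast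
    have "(\<Sum>x\<in>e. (real (degree G x))^2) = 2 * d0^2" using dg0[OF ik(3)] dg0[OF ik(4)] xy ik by simp
    then show ?thesis unfolding f_def using d0pos by (simp add: real_sqrt_mult)
  qed
  have fB: "f e = sqrt (d0^2 + d1^2)" if "e \<in> B" for e
  proof -
    from that obtain i l where il: "e = {(i,0),(i,l)}" "i < m" "1 \<le> l" "l < n" unfolding B_def by auto
    have "(\<Sum>x\<in>e. (real (degree G x))^2) = d0^2 + d1^2" using dg0[OF il(2)] dg1[OF il(2) _ il(4)] il by simp
    then show ?thesis unfolding f_def by simp
  qed
  have fC: "f e = d1 * sqrt 2" if "e \<in> C" for e
  proof -
    from that obtain i where i: "i < m" "e \<subseteq> {i} \<times> {1..<n}" "card e = 2" unfolding C_def by auto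
    then obtain x y where xy: "e = {x,y}" "x \<noteq> y" "x \<in> {i} \<times> {1..<n}" "y \<in> {i} \<times> {1..<n}"
      using two by blast
    obtain j where j: "x = (i,j)" "1 \<le> j" "j < n" using xy(3) by (cases x) auto
    obtain l where l: "y = (i,l)" "1 \<le> l" "l < n" using xy(4) by (cases y) auto
    note jl = j(1) l(1) j(2,3) l(2,3)
    have "(\<Sum>x\<in>e. (real (degree G x))^2) = 2 * d1^2" using dg1[OF i(1) _ jl(4)] dg1[OF i(1) _ jl(6)] xy jl by simp
    then show ?thesis unfolding f_def using d0pos by (simp add: real_sqrt_mult)
  qed
  have cA: "card A = m choose 2" unfolding A_def by (subst card_Asets) (auto simp: card_cartesian_product)
  have cB: "card B = m * (n - 1)" unfolding B_def
    by (subst card_image) (auto simp: inj_on_def card_cartesian_product doubleton_eq_iff)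
  have cC: "card C = m * ((n - 1) choose 2)" unfolding C_def
  proof (subst card_UN_disjoint)
    show "finite {..<m}" by simp
    show "\<forall>i\<in>{..<m}. finite {e. e \<subseteq> {i} \<times> {1..<n} \<and> card e = 2}"
    proof
      fix i show "finite {e. e \<subseteq> {i} \<times> {1..<n} \<and> card e = 2}"
        by (rule finite_subset[of _ "Pow ({i} \<times> {1..<n})"]) auto
    qed
    show "\<forall>i\<in>{..<m}. \<forall>j\<in>{..<m}. i \<noteq> j \<longrightarrow>
       {e. e \<subseteq> {i} \<times> {1..<n} \<and> card e = 2} \<inter> {e. e \<subseteq> {j} \<times> {1..<n} \<and> card e = 2} = {}"
    proof (intro ballI impI)
      fix i j :: nat assume "i \<noteq> j"
      have x0: "x = {}" if "x \<subseteq> {i} \<times> {1..<n}" "x \<subseteq> {j} \<times> {1..<n}" for x :: "(nat \<times> nat) set"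
      proof -
        have "({i} \<times> {1..<n}) \<inter> ({j} \<times> {1..<n}) = {}" using \<open>i \<noteq> j\<close> by auto
        then show ?thesis using that by blast
      qed
      then show "{e. e \<subseteq> {i} \<times> {1..<n} \<and> card e = 2} \<inter> {e. e \<subseteq> {j} \<times> {1..<n} \<and> card e = 2} = {}"
      proof (intro equals0I)
        fix e assume "e \<in> {e. e \<subseteq> {i} \<times> {1..<n} \<and> card e = 2} \<inter> {e. e \<subseteq> {j} \<times> {1..<n} \<and> card e = 2}"
        then have "e \<subseteq> {i} \<times> {1..<n}" "e \<subseteq> {j} \<times> {1..<n}" "card e = 2" by blast+
        then have "e = {}" using x0 by blast
        with \<open>card e = 2\<close> show False by simp
      qed
    qed
    show "(\<Sum>i<m. card {e. e \<subseteq> {i} \<times> {1..<n} \<and> card e = 2}) = m * ((n - 1) choose 2)"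
      by (simp add: card_Asets card_cartesian_product)
  qed
  have "sombor G = sum f A + sum f B + sum f C"
    unfolding sombor_def f_def[symmetric] E
    using finA finB finC AB ABC by (simp add: sum.union_disjoint)
  also have "\<dots> = real (card A) * (d0 * sqrt 2) + real (card B) * sqrt (d0^2 + d1^2) + real (card C) * (d1 * sqrt 2)"
    using fA fB fC by simp
  finally have S: "sombor G = \<dots>" .
  have m2: "real (m choose 2) = real m * (real m - 1) / 2"
    by (rule ch2)
  have n2: "real ((n - 1) choose 2) = (real n - 1) * (real n - 2) / 2"
  proof -
    have "real ((n - 1) choose 2) = real (n - 1) * (real (n - 1) - 1) / 2"
      by (rule ch2)
    then show ?thesis using assms by (simp add: of_nat_diff)
  qed
  have rB: "real (card B) = real m * (real n - 1)" using cB assms by (simp add: of_nat_diff)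
  have rC: "real (card C) = real m * ((real n - 1) * (real n - 2) / 2)" using cC n2 by simp
  have rA: "real (card A) = real m * (real m - 1) / 2" using cA m2 by simp
  have "sombor G = real m * (real m - 1) / 2 * (d0 * sqrt 2) + real m * (real n - 1) * sqrt (d0^2 + d1^2)
      + real m * ((real n - 1) * (real n - 2) / 2) * (d1 * sqrt 2)"
    using S rA rB rC by simp
  also have "\<dots> = real m * ((real m + real n - 2) * (real m - 1) / 2 + (real n - 1)^2 * (real n / 2 - 1)) * sqrt 2
     + real m * (real n - 1) * sqrt ((real m + real n - 2)^2 + (real n - 1)^2)"
    unfolding d0_def d1_def by (simp add: field_simps power2_eq_square)
  finally show ?thesis unfolding G_def .
qed

end
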